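(* For every integer $m\ge 1$ a generalised golden ratio $\mathcal{G}(m)$ exists, and $$\mathcal{G}(m)=\begin{cases} k+1 & \text{if } m=2k,\\[2pt] \dfrac{k+1+\sqrt{k^{2}+6k+5}}{2} & \text{if } m=2k+1,\end{cases}$$ where $k$ is a nonnegative integer.
   Context: Let $m\in\mathbb{N}$ and $\beta\in(1,m+1]$. For $x\in[0,\frac{m}{\beta-1}]$ let $\Sigma_{\beta,m}(x)=\{(\epsilon_i)_{i=1}^\infty\in\{0,\ldots,m\}^{\mathbb{N}}:\sum_{i=1}^\infty \epsilon_i\beta^{-i}=x\}$ be the set of $\beta$-expansions of $x$. A real number $\mathcal{G}(m)$ is called a generalised golden ratio for $m$ if (i) for every $\beta\in(1,\mathcal{G}(m))$ the set $\Sigma_{\beta,m}(x)$ is uncountable for every $x\in(0,\frac{m}{\beta-1})$, and (ii) for every $\beta\in(\mathcal{G}(m),m+1]$ there exists $x\in(0,\frac{m}{\beta-1})$ with $|\Sigma_{\beta,m}(x)|=1$. *)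

theory Defs
  imports "HOL-Analysis.Analysis"
begin

text \<open>We index sequences from 0, so eps i is the (i+1)-th digit, weighted by beta^(-(i+1)).\<close>
definition expansions :: "real \<Rightarrow> nat \<Rightarrow> real \<Rightarrow> (nat \<Rightarrow> nat) set" where
  "expansions \<beta> m x = {\<epsilon>. (\<forall>i. \<epsilon> i \<le> m) \<and> (\<lambda>i. real (\<epsilon> i) / \<beta> ^ (i + 1)) sums x}"

definition gen_golden_ratio :: "nat \<Rightarrow> real \<Rightarrow> bool" where
  "gen_golden_ratio m G \<longleftrightarrow>
     (\<forall>\<beta>. 1 < \<beta> \<and> \<beta> < G \<and> \<beta> \<le> real m + 1 \<longrightarrow>
        (\<forall>x. 0 < x \<and> x < real m / (\<beta> - 1) \<longrightarrow> uncountable (expansions \<beta> m x))) \<and>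
     (\<forall>\<beta>. G < \<beta> \<and> \<beta> \<le> real m + 1 \<longrightarrow>
        (\<exists>x. 0 < x \<and> x < real m / (\<beta> - 1) \<and> card (expansions \<beta> m x) = 1))"

end

theory Submission
  imports Defs
begin

fun reach :: "real \<Rightarrow> nat \<Rightarrow> real \<Rightarrow> nat list \<Rightarrow> real \<Rightarrow> bool" where
  "reach \<beta> m y [] z = (z = y)"
| "reach \<beta> m y (d # w) z = (d \<le> m \<and> 0 \<le> \<beta>*y - real d \<and> \<beta>*y - real d \<le> real m/(\<beta>-1) \<and> reach \<beta> m (\<beta>*y - real d) w z)"

lemma reach_append: "reach \<beta> m y (u @ v) z \<longleftrightarrow> (\<exists>t. reach \<beta> m y u t \<and> reach \<beta> m t v z)"
  by (induction u arbitrary: y) auto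

lemma reach_digits: "reach \<beta> m y w z \<Longrightarrow> d \<in> set w \<Longrightarrow> d \<le> m"
  by (induction w arbitrary: y) auto

lemma reach_bounds: "reach \<beta> m y w z \<Longrightarrow> 0 \<le> y \<Longrightarrow> y \<le> real m/(\<beta>-1) \<Longrightarrow> 0 \<le> z \<and> z \<le> real m/(\<beta>-1)"
  by (induction w arbitrary: y) auto

lemma reach_val: "reach \<beta> m y w z \<Longrightarrow> \<beta> \<noteq> 0 \<Longrightarrow> y = (\<Sum>i<length w. real (w!i)/\<beta>^(i+1)) + z/\<beta>^(length w)"
proof (induction w arbitrary: y)
  case Nil thus ?case by simp
next
  case (Cons d w)
  hence IH: "\<beta>*y - real d = (\<Sum>i<length w. real (w!i)/\<beta>^(i+1)) + z/\<beta>^(length w)" by simp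
  have "(\<Sum>i<length (d#w). real ((d#w)!i)/\<beta>^(i+1)) = real d/\<beta> + (\<Sum>i<length w. real (w!i)/\<beta>^(i+1))/\<beta>"
    by (simp add: sum.lessThan_Suc_shift sum_divide_distrib mult_ac del: sum.lessThan_Suc)
  also have "\<dots> = real d/\<beta> + (\<beta>*y - real d - z/\<beta>^(length w))/\<beta>" using IH by simp
  finally show ?case using Cons.prems by (simp add: field_simps)
qed

definition stepc :: "real \<Rightarrow> nat \<Rightarrow> (nat \<Rightarrow> nat) \<Rightarrow> nat list \<times> real \<Rightarrow> nat list \<times> real" where
 "stepc \<beta> m g s = (let wz = (SOME wz. fst wz \<noteq> [] \<and> reach \<beta> m (snd s) (fst wz) (snd wz) \<and> 0 < snd wz \<and> snd wz < real m/(\<beta>-1) \<and> (\<exists>i<length (fst wz). fst wz ! i \<noteq> g (length (fst s) + i))) in (fst s @ fst wz, snd wz))"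

primrec constr :: "real \<Rightarrow> nat \<Rightarrow> (nat \<Rightarrow> nat \<Rightarrow> nat) \<Rightarrow> real \<Rightarrow> nat \<Rightarrow> nat list \<times> real" where
  "constr \<beta> m f x 0 = ([], x)"
| "constr \<beta> m f x (Suc j) = stepc \<beta> m (f j) (constr \<beta> m f x j)"

definition branchable :: "real \<Rightarrow> nat \<Rightarrow> real \<Rightarrow> bool" where
 "branchable \<beta> m y \<longleftrightarrow> (\<exists>w a b ya yb. a \<noteq> b \<and> reach \<beta> m y (w@[a]) ya \<and> reach \<beta> m y (w@[b]) yb \<and> 0 < ya \<and> ya < real m/(\<beta>-1) \<and> 0 < yb \<and> yb < real m/(\<beta>-1))"

lemma br_pre:
  fixes d :: nat and \<beta> y :: real
  assumes "d \<le> m" "0 \<le> \<beta>*y - d" "\<beta>*y - d \<le> real m/(\<beta>-1)" "branchable \<beta> m (\<beta>*y - d)"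
  shows "branchable \<beta> m y"
proof -
  from assms(4) obtain w a b ya yb where h: "a \<noteq> b" "reach \<beta> m (\<beta>*y - d) (w@[a]) ya" "reach \<beta> m (\<beta>*y - d) (w@[b]) yb"
     "0 < ya" "ya < real m/(\<beta>-1)" "0 < yb" "yb < real m/(\<beta>-1)" unfolding branchable_def by blast
  have r: "reach \<beta> m y ((d#w)@[a]) ya" "reach \<beta> m y ((d#w)@[b]) yb" using h(2,3) assms(1-3) by simp_all
  show ?thesis unfolding branchable_def
    apply (rule exI[of _ "d#w"], rule exI[of _ a], rule exI[of _ b], rule exI[of _ ya], rule exI[of _ yb])
    using h r by simp
qed

lemma br_switch:
  fixes d :: nat and \<beta> y :: real
  assumes "d+1 \<le> m" "real d + 1 < \<beta>*y" "\<beta>*y < real d + real m/(\<beta>-1)"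
  shows "branchable \<beta> m y"
proof -
  have "reach \<beta> m y ([]@[d]) (\<beta>*y - d)" using assms by (simp; linarith)
  moreover have "reach \<beta> m y ([]@[d+1]) (\<beta>*y - d - 1)" using assms by (simp; linarith)
  moreover have "0 < \<beta>*y - d" "\<beta>*y - d < real m/(\<beta>-1)" "0 < \<beta>*y - d - 1" "\<beta>*y - d - 1 < real m/(\<beta>-1)"
    using assms by linarith+
  ultimately show ?thesis unfolding branchable_def by (metis n_not_Suc_n Suc_eq_plus1)
qed

context
  fixes \<beta> :: real and m :: nat
  assumes b1: "1 < \<beta>" and m1: "1 \<le> m" and L1: "1 < real m/(\<beta>-1)"
    and H2: "1 < \<beta>*(real m/(\<beta>-1) - 1)"
    and Hgap: "real m/(\<beta>-1) \<le> 2 \<Longrightarrow> \<exists>k::nat. k+1 \<le> m \<and> real k + 1 < \<beta>*(real m/(\<beta>-1) - 1) \<and> \<beta> < real k + real m/(\<beta>-1)"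
begin

abbreviation "LL \<equiv> real m/(\<beta>-1)"

lemma bL: "\<beta> * LL = real m + LL"
  using b1 by (simp add: field_simps)

lemma br_mid:
  assumes "0<y" "y<LL" "1 < \<beta>*y" "\<beta>*y < real m - 1 + LL"
  shows "branchable \<beta> m y"
proof -
  define t where "t = \<beta>*y"
  define d where "d = nat (\<lceil>t\<rceil> - 2)"
  have c2: "\<lceil>t\<rceil> \<ge> 2" using assms(3) t_def by (simp add: le_ceiling_iff)
  have rd: "real d = of_int \<lceil>t\<rceil> - 2" using c2 d_def by simp
  have dd: "real d + 1 < t" "t \<le> real d + 2" using rd ceiling_correct[of t] by linarith+
  show ?thesis
  proof (cases "d+1 \<le> m")
    case True
    show ?thesis
    proof (cases "t < real d + LL")
      case True
      then show ?thesis using br_switch[of d m \<beta> y] \<open>d+1 \<le> m\<close> dd t_def by simp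
    next
      case False
      hence g: "LL \<le> 2" using dd by linarith
      define y' where "y' = t - real (d+1)"
      have y'b: "LL - 1 \<le> y'" "y' \<le> 1" using False dd y'_def by auto
      obtain k::nat where k: "k+1 \<le> m" "real k + 1 < \<beta>*(LL - 1)" "\<beta> < real k + LL" using Hgap g by blast
      have "\<beta>*(LL-1) \<le> \<beta>*y'" using y'b b1 by simp
      moreover have "\<beta>*y' \<le> \<beta>" using y'b b1 by simp
      ultimately have "branchable \<beta> m y'" using br_switch[of k m \<beta> y'] k by linarith
      moreover have "y' = \<beta>*y - real (d+1)" using y'_def t_def by simp
      ultimately show ?thesis using br_pre[of "d+1" m \<beta> y] \<open>d+1 \<le> m\<close> y'b L1 by auto
    qed
  next
    case False
    have "real (m-1) + 1 < \<beta>*y" using False dd t_def m1 by (simp add: of_nat_diff)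
    moreover have "\<beta>*y < real (m-1) + LL" using assms(4) m1 by (simp add: of_nat_diff)
    ultimately show ?thesis using br_switch[of "m-1" m \<beta> y] m1 by simp
  qed
qed

lemma br_top:
  "0<y \<Longrightarrow> y<LL \<Longrightarrow> 1 < \<beta>^n*(LL-y) \<Longrightarrow> real m - 1 + LL \<le> \<beta>*y \<Longrightarrow> branchable \<beta> m y"
proof (induction n arbitrary: y)
  case 0
  hence h: "1 < LL - y" by simp
  have "(LL-y) < \<beta>*(LL-y)" using mult_strict_right_mono[of 1 \<beta> "LL-y"] b1 h by simp
  moreover have "\<beta>*(LL-y) = real m + LL - \<beta>*y" using bL by (simp add: algebra_simps)
  ultimately have False using 0 h by linarith
  then show ?case ..
next
  case (Suc n)
  define y' where "y' = \<beta>*y - real m"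
  have e: "LL - y' = \<beta>*(LL-y)" using bL y'_def by (simp add: algebra_simps)
  have p: "1 < \<beta>^n*(LL-y')" using e Suc.prems(3) by (simp add: mult_ac)
  have y'1: "LL - 1 \<le> y'" using Suc.prems(4) y'_def by simp
  have "0 < \<beta>*(LL-y)" using b1 Suc.prems(2) by simp
  hence y'2: "y' < LL" using e by linarith
  have pos: "0 < y'" using y'1 L1 by simp
  have "branchable \<beta> m y'"
  proof (cases "real m - 1 + LL \<le> \<beta>*y'")
    case True then show ?thesis using Suc.IH pos y'2 p by blast
  next
    case False
    have "\<beta>*(LL-1) \<le> \<beta>*y'" using y'1 b1 by simp
    hence "1 < \<beta>*y'" using H2 by linarith
    moreover have "\<beta>*y' < real m - 1 + LL" using False by linarith
    ultimately show ?thesis using br_mid[OF pos y'2] by blast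
  qed
  moreover have "0 \<le> \<beta>*y - real m" "\<beta>*y - real m \<le> LL" using y'_def pos y'2 by auto
  ultimately show ?case using br_pre[of m m \<beta> y] y'_def by simp
qed

lemma br_top_all: "0<y \<Longrightarrow> y<LL \<Longrightarrow> real m - 1 + LL \<le> \<beta>*y \<Longrightarrow> branchable \<beta> m y"
proof -
  assume a: "0<y" "y<LL" "real m - 1 + LL \<le> \<beta>*y"
  obtain n where "1/(LL-y) < \<beta>^n" using real_arch_pow[OF b1] by blast
  hence "1 < \<beta>^n*(LL-y)" using a by (simp add: field_simps)
  thus ?thesis using br_top a by blast
qed

lemma br_bot:
  "0<y \<Longrightarrow> y<LL \<Longrightarrow> 1 < \<beta>^n*y \<Longrightarrow> \<beta>*y \<le> 1 \<Longrightarrow> branchable \<beta> m y"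
proof (induction n arbitrary: y)
  case 0
  hence h: "1 < y" by simp
  have "y < \<beta>*y" using mult_strict_right_mono[of 1 \<beta> y] b1 h by simp
  then have False using 0 h by linarith
  then show ?case ..
next
  case (Suc n)
  define y' where "y' = \<beta>*y"
  have p: "1 < \<beta>^n*y'" using Suc.prems(3) y'_def by (simp add: mult_ac)
  have pos: "0 < y'" using Suc.prems(1) b1 y'_def by simp
  have y'2: "y' < LL" using Suc.prems(4) L1 y'_def by simp
  have "branchable \<beta> m y'"
  proof (cases "\<beta>*y' \<le> 1")
    case True then show ?thesis using Suc.IH pos y'2 p by blast
  next
    case False
    show ?thesis
    proof (cases "real m - 1 + LL \<le> \<beta>*y'")
      case True then show ?thesis using br_top_all pos y'2 by blast
    next
      case F2: False
      have "1 < \<beta>*y'" using False by linarith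
      moreover have "\<beta>*y' < real m - 1 + LL" using F2 by linarith
      ultimately show ?thesis using br_mid[OF pos y'2] by blast
    qed
  qed
  moreover have "0 \<le> \<beta>*y - real 0" "\<beta>*y - real 0 \<le> LL" using y'_def pos y'2 by auto
  ultimately show ?case using br_pre[of 0 m \<beta> y] y'_def by simp
qed

lemma br_all: "0<y \<Longrightarrow> y<LL \<Longrightarrow> branchable \<beta> m y"
proof -
  assume a: "0<y" "y<LL"
  show ?thesis
  proof (cases "\<beta>*y \<le> 1")
    case True
    obtain n where "1/y < \<beta>^n" using real_arch_pow[OF b1] by blast
    hence "1 < \<beta>^n*y" using a by (simp add: field_simps)
    thus ?thesis using br_bot a True by blast
  next
    case False
    show ?thesis
    proof (cases "real m - 1 + LL \<le> \<beta>*y")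
      case True then show ?thesis using br_top_all a by blast
    next
      case F2: False
      have "1 < \<beta>*y" using False by linarith
      moreover have "\<beta>*y < real m - 1 + LL" using F2 by linarith
      ultimately show ?thesis using br_mid a by blast
    qed
  qed
qed

lemma diag_step:
  assumes "0<y" "y<LL"
  shows "\<exists>w z. w \<noteq> [] \<and> reach \<beta> m y w z \<and> 0<z \<and> z<LL \<and> (\<exists>i<length w. w!i \<noteq> g (n+i))"
proof -
  obtain w a b ya yb where h: "a \<noteq> b" "reach \<beta> m y (w@[a]) ya" "reach \<beta> m y (w@[b]) yb"
     "0 < ya" "ya < LL" "0 < yb" "yb < LL" using br_all[OF assms] unfolding branchable_def by blast
  show ?thesis
  proof (cases "g (n + length w) = a")
    case True
    then show ?thesis using h by (intro exI[of _ "w@[b]"] exI[of _ yb]) (auto intro!: exI[of _ "length w"])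
  next
    case False
    then show ?thesis using h by (intro exI[of _ "w@[a]"] exI[of _ ya]) (auto intro!: exI[of _ "length w"])
  qed
qed


lemma stepc_prop:
  assumes "0 < snd s" "snd s < LL"
  shows "\<exists>w. fst (stepc \<beta> m g s) = fst s @ w \<and> w \<noteq> [] \<and> reach \<beta> m (snd s) w (snd (stepc \<beta> m g s))
     \<and> 0 < snd (stepc \<beta> m g s) \<and> snd (stepc \<beta> m g s) < LL \<and> (\<exists>i<length w. w!i \<noteq> g (length (fst s) + i))"
proof -
  let ?P = "\<lambda>wz. fst wz \<noteq> [] \<and> reach \<beta> m (snd s) (fst wz) (snd wz) \<and> 0 < snd wz \<and> snd wz < real m/(\<beta>-1) \<and> (\<exists>i<length (fst wz). fst wz ! i \<noteq> g (length (fst s) + i))"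
  obtain w z where "w \<noteq> [] \<and> reach \<beta> m (snd s) w z \<and> 0<z \<and> z<LL \<and> (\<exists>i<length w. w!i \<noteq> g (length (fst s)+i))"
    using diag_step[OF assms] by blast
  hence "\<exists>wz. ?P wz" by (intro exI[of _ "(w,z)"]) simp
  hence "?P (SOME wz. ?P wz)" by (rule someI_ex)
  thus ?thesis unfolding stepc_def Let_def by auto
qed

lemma constr_inv:
  assumes "0 < x" "x < LL"
  shows "reach \<beta> m x (fst (constr \<beta> m f x j)) (snd (constr \<beta> m f x j)) \<and> 0 < snd (constr \<beta> m f x j)
     \<and> snd (constr \<beta> m f x j) < LL \<and> j \<le> length (fst (constr \<beta> m f x j))"
proof (induction j)
  case 0 then show ?case using assms by simp
next
  case (Suc j)
  obtain w where w: "fst (stepc \<beta> m (f j) (constr \<beta> m f x j)) = fst (constr \<beta> m f x j) @ w" "w \<noteq> []"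
     "reach \<beta> m (snd (constr \<beta> m f x j)) w (snd (stepc \<beta> m (f j) (constr \<beta> m f x j)))"
     "0 < snd (stepc \<beta> m (f j) (constr \<beta> m f x j))" "snd (stepc \<beta> m (f j) (constr \<beta> m f x j)) < LL"
    using stepc_prop[of "constr \<beta> m f x j" "f j"] Suc by blast
  have "reach \<beta> m x (fst (constr \<beta> m f x j) @ w) (snd (stepc \<beta> m (f j) (constr \<beta> m f x j)))"
    using reach_append Suc w(3) by blast
  moreover have "Suc j \<le> length (fst (constr \<beta> m f x j) @ w)" using Suc w(2) by (cases w) auto
  ultimately show ?case using w by simp
qed

lemma constr_diff:
  assumes "0 < x" "x < LL"
  shows "\<exists>i<length (fst (constr \<beta> m f x (Suc j))). fst (constr \<beta> m f x (Suc j)) ! i \<noteq> f j i"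
proof -
  have I: "0 < snd (constr \<beta> m f x j)" "snd (constr \<beta> m f x j) < LL" using constr_inv[OF assms] by auto
  obtain w where w: "fst (stepc \<beta> m (f j) (constr \<beta> m f x j)) = fst (constr \<beta> m f x j) @ w"
     "\<exists>i<length w. w!i \<noteq> f j (length (fst (constr \<beta> m f x j)) + i)"
    using stepc_prop[OF I, of "f j"] by blast
  then obtain i where i: "i < length w" "w!i \<noteq> f j (length (fst (constr \<beta> m f x j)) + i)" by blast
  show ?thesis
    by (rule exI[of _ "length (fst (constr \<beta> m f x j)) + i"]) (use w(1) i in \<open>simp add: nth_append\<close>)
qed

lemma constr_prefix:
  assumes "0 < x" "x < LL" "j \<le> k"
  shows "\<exists>u. fst (constr \<beta> m f x k) = fst (constr \<beta> m f x j) @ u"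
  using assms(3)
proof (induction k rule: dec_induct)
  case base then show ?case by simp
next
  case (step k)
  have I: "0 < snd (constr \<beta> m f x k)" "snd (constr \<beta> m f x k) < LL" using constr_inv[OF assms(1,2)] by auto
  obtain w where "fst (stepc \<beta> m (f k) (constr \<beta> m f x k)) = fst (constr \<beta> m f x k) @ w"
    using stepc_prop[OF I, of "f k"] by blast
  then show ?case using step.IH by auto
qed

lemma uncount:
  assumes "0 < x" "x < LL"
  shows "uncountable (expansions \<beta> m x)"
proof
  assume cnt: "countable (expansions \<beta> m x)"
  define f where "f = from_nat_into (expansions \<beta> m x)"
  define C where "C = constr \<beta> m f x"
  define e where "e i = fst (C (Suc i)) ! i" for i
  have inv: "reach \<beta> m x (fst (C j)) (snd (C j)) \<and> 0 < snd (C j) \<and> snd (C j) < LL \<and> j \<le> length (fst (C j))" for j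
    using constr_inv[OF assms] C_def by simp
  have stab: "e i = fst (C j) ! i" if "i < length (fst (C j))" for i j
  proof -
    define K where "K = max j (Suc i)"
    obtain u where u: "fst (C K) = fst (C j) @ u" using constr_prefix[OF assms, of j K] C_def K_def by auto
    obtain v where v: "fst (C K) = fst (C (Suc i)) @ v" using constr_prefix[OF assms, of "Suc i" K] C_def K_def by auto
    have "i < length (fst (C (Suc i)))" using inv[of "Suc i"] by simp
    then have "e i = fst (C K) ! i" using v e_def by (simp add: nth_append)
    also have "\<dots> = fst (C j) ! i" using u that by (simp add: nth_append)
    finally show ?thesis .
  qed
  have ne: "e \<noteq> f j" for j
  proof
    assume eq: "e = f j"
    obtain i where i: "i < length (fst (C (Suc j)))" "fst (C (Suc j)) ! i \<noteq> f j i"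
      using constr_diff[OF assms, of f j] C_def by auto
    have "e i = fst (C (Suc j)) ! i" using stab[OF i(1)] .
    then show False using i(2) eq by simp
  qed
  have dig: "e i \<le> m" for i
  proof -
    have "i < length (fst (C (Suc i)))" using inv[of "Suc i"] by simp
    hence "e i \<in> set (fst (C (Suc i)))" unfolding e_def by simp
    thus ?thesis using reach_digits inv by blast
  qed
  have bnd: "x - LL * (1/\<beta>)^N \<le> (\<Sum>i<N. real (e i)/\<beta>^(i+1)) \<and> (\<Sum>i<N. real (e i)/\<beta>^(i+1)) \<le> x" for N
  proof -
    define p where "p = fst (C N)"
    have r: "reach \<beta> m x (take N p @ drop N p) (snd (C N))" using inv p_def by simp
    then obtain z where z: "reach \<beta> m x (take N p) z" using reach_append by blast
    have zb: "0 \<le> z \<and> z \<le> LL" using reach_bounds[OF z] assms by simp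
    have lt: "length (take N p) = N" using inv[of N] p_def by simp
    have "x = (\<Sum>i<N. real (take N p!i)/\<beta>^(i+1)) + z/\<beta>^N" using reach_val[OF z] b1 lt by simp
    moreover have "(\<Sum>i<N. real (take N p!i)/\<beta>^(i+1)) = (\<Sum>i<N. real (e i)/\<beta>^(i+1))"
    proof (rule sum.cong)
      fix i assume "i \<in> {..<N}"
      hence "i < N" by simp
      moreover have "i < length p" using inv[of N] p_def \<open>i < N\<close> by simp
      ultimately show "real (take N p!i)/\<beta>^(i+1) = real (e i)/\<beta>^(i+1)" using stab[of i N] p_def by simp
    qed simp
    moreover have "z/\<beta>^N \<le> LL/\<beta>^N" using zb b1 by (intro divide_right_mono) auto
    moreover have "LL/\<beta>^N = LL * (1/\<beta>)^N" by (simp add: power_one_over)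
    moreover have "0 \<le> z/\<beta>^N" using zb b1 by simp
    ultimately show ?thesis by linarith
  qed
  have ev1: "\<forall>\<^sub>F N in sequentially. x - LL * (1/\<beta>)^N \<le> (\<Sum>i<N. real (e i)/\<beta>^(i+1))" using bnd by simp
  have ev2: "\<forall>\<^sub>F N in sequentially. (\<Sum>i<N. real (e i)/\<beta>^(i+1)) \<le> x" using bnd by simp
  have l0: "(\<lambda>N. (1/\<beta>)^N) \<longlonglongrightarrow> 0" using b1 by (intro LIMSEQ_power_zero) simp
  have "(\<lambda>N. x - LL * (1/\<beta>)^N) \<longlonglongrightarrow> x - LL * 0" by (intro tendsto_intros l0)
  hence l1: "(\<lambda>N. x - LL * (1/\<beta>)^N) \<longlonglongrightarrow> x" by simp
  have "(\<lambda>N. \<Sum>i<N. real (e i)/\<beta>^(i+1)) \<longlonglongrightarrow> x"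
    by (rule tendsto_sandwich[OF ev1 ev2 l1 tendsto_const])
  hence "(\<lambda>i. real (e i)/\<beta>^(i+1)) sums x" by (simp add: sums_def)
  hence mem: "e \<in> expansions \<beta> m x" using dig unfolding expansions_def by simp
  hence ne0: "expansions \<beta> m x \<noteq> {}" by blast
  have "range f = expansions \<beta> m x" unfolding f_def by (rule range_from_nat_into[OF ne0 cnt])
  then show False using mem ne by auto
qed

end

lemma geom_m:
  fixes \<beta> :: real assumes "1 < \<beta>"
  shows "(\<lambda>i. real m / \<beta>^(i+1)) sums (real m/(\<beta>-1))"
proof -
  have "(\<lambda>i. (1/\<beta>)^i) sums (1/(1 - 1/\<beta>))" using assms by (intro geometric_sums) simp
  hence "(\<lambda>i. (real m/\<beta>) * (1/\<beta>)^i) sums ((real m/\<beta>) * (1/(1 - 1/\<beta>)))" by (rule sums_mult)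
  moreover have e: "(real m/\<beta>) * (1/(1 - 1/\<beta>)) = real m/(\<beta>-1)"
  proof -
    have "1 - 1/\<beta> = (\<beta>-1)/\<beta>" using assms by (simp add: field_simps)
    thus ?thesis using assms by simp
  qed
  moreover have fn: "(\<lambda>i. (real m/\<beta>) * (1/\<beta>)^i) = (\<lambda>i. real m / \<beta>^(i+1))" by (simp add: power_one_over)
  ultimately show ?thesis by (simp only: e fn)
qed

lemma periodic_sums:
  fixes \<beta> :: real assumes b: "1 < \<beta>"
  shows "(\<lambda>i. real (if even i then a else b) / \<beta>^(i+1)) sums ((real a*\<beta> + real b)/(\<beta>^2-1))"
proof -
  define f where "f i = real (if even i then a else b) / \<beta>^(i+1)" for i
  have "(\<lambda>i. real (a+b) / \<beta>^(i+1)) sums (real (a+b)/(\<beta>-1))" by (rule geom_m[OF b])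
  hence sg: "summable (\<lambda>i. real (a+b) / \<beta>^(i+1))" by (rule sums_summable)
  have "summable f"
  proof (rule summable_comparison_test'[OF sg])
    fix n :: nat
    show "norm (f n) \<le> real (a+b) / \<beta>^(n+1)" unfolding f_def using b by (auto intro!: divide_right_mono)
  qed
  hence "(\<lambda>n. sum f {n*2..<n*2+2}) sums (suminf f)" by (intro sums_group) (auto simp: summable_sums)
  moreover have "sum f {n*2..<n*2+2} = (real a/\<beta> + real b/\<beta>^2) * (1/\<beta>^2)^n" for n
  proof -
    have "{n*2..<n*2+2} = {2*n, Suc (2*n)}" by auto
    hence "sum f {n*2..<n*2+2} = f (2*n) + f (Suc (2*n))" by simp
    also have "\<dots> = real a/\<beta>^(2*n+1) + real b/\<beta>^(2*n+2)" unfolding f_def by simp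
    also have "\<dots> = real a/(\<beta>*(\<beta>^2)^n) + real b/(\<beta>^2*(\<beta>^2)^n)"
    proof -
      have p1: "\<beta>^(2*n+1) = \<beta>*(\<beta>^2)^n" by (metis power_mult power_Suc Suc_eq_plus1)
      have p2: "\<beta>^(2*n+2) = \<beta>^2*(\<beta>^2)^n" by (metis power_mult power_add mult.commute)
      show ?thesis by (simp only: p1 p2)
    qed
    also have "\<dots> = (real a/\<beta> + real b/\<beta>^2) * (1/(\<beta>^2)^n)"
    proof -
      have "\<forall>q::real. q > 0 \<longrightarrow> real a/(\<beta>*q) + real b/(\<beta>^2*q) = (real a/\<beta> + real b/\<beta>^2) * (1/q)"
        using b by (auto simp: field_simps)
      moreover have "(\<beta>^2)^n > 0" using b by simp
      ultimately show ?thesis by blast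
    qed
    also have "\<dots> = (real a/\<beta> + real b/\<beta>^2) * (1/\<beta>^2)^n" by (simp add: power_one_over)
    finally show ?thesis .
  qed
  ultimately have s1: "(\<lambda>n. (real a/\<beta> + real b/\<beta>^2) * (1/\<beta>^2)^n) sums (suminf f)" by simp
  have "(\<lambda>n. (1/\<beta>^2)^n) sums (1/(1 - 1/\<beta>^2))" using b by (intro geometric_sums) (simp add: power_less_one_iff)
  hence "(\<lambda>n. (real a/\<beta> + real b/\<beta>^2) * (1/\<beta>^2)^n) sums ((real a/\<beta> + real b/\<beta>^2) * (1/(1 - 1/\<beta>^2)))"
    by (rule sums_mult)
  hence "suminf f = (real a/\<beta> + real b/\<beta>^2) * (1/(1 - 1/\<beta>^2))" using s1 sums_unique2 by blast
  also have "\<dots> = (real a*\<beta> + real b)/(\<beta>^2-1)"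
  proof -
    have b2: "\<beta>^2 > 1" using b by (simp add: one_less_power)
    have "1 - 1/\<beta>^2 = (\<beta>^2-1)/\<beta>^2" using b by (simp add: field_simps)
    hence "(real a/\<beta> + real b/\<beta>^2) * (1/(1 - 1/\<beta>^2)) = ((real a/\<beta> + real b/\<beta>^2) * \<beta>^2)/(\<beta>^2-1)"
      by simp
    also have "(real a/\<beta> + real b/\<beta>^2) * \<beta>^2 = real a*\<beta> + real b" using b
      by (simp add: field_simps power2_eq_square)
    finally show ?thesis .
  qed
  finally have "f sums ((real a*\<beta> + real b)/(\<beta>^2-1))" using \<open>summable f\<close> summable_sums by fastforce
  then show ?thesis unfolding f_def by simp
qed

lemma unique_exp:
  fixes \<beta> x :: real and c :: "nat \<Rightarrow> nat"
  assumes b: "1 < \<beta>" and cm: "\<forall>i. c i \<le> m" and cs: "(\<lambda>i. real (c i)/\<beta>^(i+1)) sums x"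
  and tails: "\<forall>n. \<exists>t. (\<lambda>i. real (c (n+1+i))/\<beta>^(i+1)) sums t \<and> real m/(\<beta>-1) - 1 < t \<and> t < 1"
  shows "expansions \<beta> m x = {c}"
proof
  show "{c} \<subseteq> expansions \<beta> m x" using cm cs by (simp add: expansions_def)
  show "expansions \<beta> m x \<subseteq> {c}"
  proof
    fix d assume "d \<in> expansions \<beta> m x"
    hence dm: "\<forall>i. d i \<le> m" and ds: "(\<lambda>i. real (d i)/\<beta>^(i+1)) sums x" by (auto simp: expansions_def)
    have "d = c"
    proof (rule ccontr)
      assume "d \<noteq> c"
      then obtain j where "d j \<noteq> c j" by auto
      define n where "n = (LEAST j. d j \<noteq> c j)"
      have dn: "d n \<noteq> c n" using LeastI[of "\<lambda>j. d j \<noteq> c j" j] \<open>d j \<noteq> c j\<close> n_def by blast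
      have lt: "d i = c i" if "i < n" for i using not_less_Least[of i "\<lambda>j. d j \<noteq> c j"] that n_def by blast
      define P where "P = \<beta>^(n+1)"
      have P0: "0 < P" using b P_def by simp
      have tailsum: "(\<lambda>i. real (e (n+1+i))/\<beta>^(i+1)) sums (P * (x - (\<Sum>i<n. real (e i)/\<beta>^(i+1))) - real (e n))"
        if es: "(\<lambda>i. real (e i)/\<beta>^(i+1)) sums x" for e :: "nat \<Rightarrow> nat"
      proof -
        have s0: "(\<lambda>i. P * (real (e (i + Suc n))/\<beta>^(i + Suc n + 1))) sums (P * (x - (\<Sum>i<Suc n. real (e i)/\<beta>^(i+1))))"
          using sums_mult[OF sums_split_initial_segment[OF es, of "Suc n"], of P] by simp
        have eqf: "(\<lambda>i. P * (real (e (i + Suc n))/\<beta>^(i + Suc n + 1))) = (\<lambda>i. real (e (n+1+i))/\<beta>^(i+1))"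
        proof
          fix i
          have "\<beta>^(i + Suc n + 1) = \<beta>^(i+1) * P" unfolding P_def by (simp add: power_add mult_ac)
          thus "P * (real (e (i + Suc n))/\<beta>^(i + Suc n + 1)) = real (e (n+1+i))/\<beta>^(i+1)"
            using P0 b by (simp add: add_ac)
        qed
        have eqv: "P * (x - (\<Sum>i<Suc n. real (e i)/\<beta>^(i+1))) = P * (x - (\<Sum>i<n. real (e i)/\<beta>^(i+1))) - real (e n)"
          using P0 b unfolding P_def by (simp add: algebra_simps)
        show ?thesis using s0 unfolding eqf eqv .
      qed
      define S where "S = (\<Sum>i<n. real (c i)/\<beta>^(i+1))"
      have SS: "(\<Sum>i<n. real (d i)/\<beta>^(i+1)) = S" unfolding S_def by (rule sum.cong) (auto simp: lt)
      have sc: "(\<lambda>i. real (c (n+1+i))/\<beta>^(i+1)) sums (P * (x - S) - real (c n))" using tailsum[OF cs] S_def by simp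
      have sd: "(\<lambda>i. real (d (n+1+i))/\<beta>^(i+1)) sums (P * (x - S) - real (d n))" using tailsum[OF ds] SS by simp
      obtain t where t: "(\<lambda>i. real (c (n+1+i))/\<beta>^(i+1)) sums t" "real m/(\<beta>-1) - 1 < t" "t < 1" using tails by blast
      have tv: "t = P * (x - S) - real (c n)" using sums_unique2[OF t(1) sc] .
      have "0 \<le> P * (x - S) - real (d n)"
        by (rule sums_le[OF _ sums_zero sd]) (use b in simp)
      moreover have "P * (x - S) - real (d n) \<le> real m/(\<beta>-1)"
        by (rule sums_le[OF _ sd geom_m[OF b, of m]]) (use dm b in \<open>auto intro!: divide_right_mono\<close>)
      ultimately show False
      proof (cases "d n < c n")
        case True
        hence "d n + 1 \<le> c n" by simp
        hence "real (d n) + 1 \<le> real (c n)" by linarith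
        thus False using \<open>P * (x - S) - real (d n) \<le> real m/(\<beta>-1)\<close> t(2) tv by linarith
      next
        case False
        hence "c n + 1 \<le> d n" using dn by simp
        hence "real (c n) + 1 \<le> real (d n)" by linarith
        thus False using \<open>0 \<le> P * (x - S) - real (d n)\<close> t(3) tv by linarith
      qed
    qed
    thus "d \<in> {c}" by simp
  qed
qed

lemma tail_ok:
  fixes \<beta> :: real
  assumes b: "1 < \<beta>" and c1: "e0*\<beta> + e1 < \<beta>^2 - 1" and c2: "real m*(\<beta>+1) - (\<beta>^2-1) < e0*\<beta> + e1"
  shows "real m/(\<beta>-1) - 1 < (e0*\<beta> + e1)/(\<beta>^2-1) \<and> (e0*\<beta> + e1)/(\<beta>^2-1) < 1"
proof -
  have q: "\<beta>^2 - 1 = (\<beta>-1)*(\<beta>+1)" by (simp add: algebra_simps power2_eq_square)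
  have p: "0 < \<beta>^2 - 1" using b q by simp
  have n2: "\<beta>*\<beta> - 1 \<noteq> 0" using p by (simp add: power2_eq_square)
  have "real m/(\<beta>-1) - 1 = (real m*(\<beta>+1) - (\<beta>^2-1))/(\<beta>^2-1)" using b n2
    by (simp add: field_simps power2_eq_square)
  also have "\<dots> < (e0*\<beta> + e1)/(\<beta>^2-1)" using c2 p by (simp add: divide_strict_right_mono)
  finally show ?thesis using c1 p by simp
qed

lemma periodic_unique:
  fixes \<beta> :: real and a b m :: nat
  assumes bb: "1 < \<beta>" and am: "a \<le> m" and bm: "b \<le> m"
    and c1: "real a*\<beta> + real b < \<beta>^2 - 1" and c2: "real b*\<beta> + real a < \<beta>^2 - 1"
    and c3: "real m*(\<beta>+1) - (\<beta>^2-1) < real a*\<beta> + real b"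
    and c4: "real m*(\<beta>+1) - (\<beta>^2-1) < real b*\<beta> + real a"
  shows "expansions \<beta> m ((real a*\<beta> + real b)/(\<beta>^2-1)) = {\<lambda>i. if even i then a else b}"
proof (rule unique_exp[OF bb])
  show "\<forall>i. (if even i then a else b) \<le> m" using am bm by simp
  show "(\<lambda>i. real (if even i then a else b)/\<beta>^(i+1)) sums ((real a*\<beta> + real b)/(\<beta>^2-1))"
    by (rule periodic_sums[OF bb])
  show "\<forall>n. \<exists>t. (\<lambda>i. real (if even (n+1+i) then a else b)/\<beta>^(i+1)) sums t \<and> real m/(\<beta>-1) - 1 < t \<and> t < 1"
  proof
    fix n
    show "\<exists>t. (\<lambda>i. real (if even (n+1+i) then a else b)/\<beta>^(i+1)) sums t \<and> real m/(\<beta>-1) - 1 < t \<and> t < 1"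
    proof (cases "even n")
      case True
      have "(\<lambda>i. real (if even (n+1+i) then a else b)/\<beta>^(i+1)) = (\<lambda>i. real (if even i then b else a)/\<beta>^(i+1))"
        using True by (auto simp: fun_eq_iff)
      moreover have "(\<lambda>i. real (if even i then b else a)/\<beta>^(i+1)) sums ((real b*\<beta> + real a)/(\<beta>^2-1))"
        by (rule periodic_sums[OF bb])
      ultimately show ?thesis using tail_ok[OF bb c2 c4] by auto
    next
      case False
      have "(\<lambda>i. real (if even (n+1+i) then a else b)/\<beta>^(i+1)) = (\<lambda>i. real (if even i then a else b)/\<beta>^(i+1))"
        using False by (auto simp: fun_eq_iff)
      moreover have "(\<lambda>i. real (if even i then a else b)/\<beta>^(i+1)) sums ((real a*\<beta> + real b)/(\<beta>^2-1))"
        by (rule periodic_sums[OF bb])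
      ultimately show ?thesis using tail_ok[OF bb c1 c3] by auto
    qed
  qed
qed

lemma even_case:
  fixes k :: nat assumes k1: "1 \<le> k"
  shows "gen_golden_ratio (2*k) (real k + 1)"
  unfolding gen_golden_ratio_def
proof (intro conjI allI impI)
  fix \<beta> x :: real
  assume bb: "1 < \<beta> \<and> \<beta> < real k + 1 \<and> \<beta> \<le> real (2*k) + 1" and xx: "0 < x \<and> x < real (2*k)/(\<beta>-1)"
  have b1: "1 < \<beta>" using bb by simp
  have L2: "2 < real (2*k)/(\<beta>-1)" using bb by (simp add: pos_less_divide_eq)
  have H2: "1 < \<beta>*(real (2*k)/(\<beta>-1) - 1)"
    using mult_strict_mono[of 1 \<beta> 1 "real (2*k)/(\<beta>-1) - 1"] b1 L2 by simp
  show "uncountable (expansions \<beta> (2*k) x)"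
    by (rule uncount[OF b1 _ _ H2]) (use k1 L2 xx in auto)
next
  fix \<beta> :: real
  assume bb: "real k + 1 < \<beta> \<and> \<beta> \<le> real (2*k) + 1"
  have b1: "1 < \<beta>" using bb k1 by simp
  have q: "\<beta>^2 - 1 = (\<beta>-1)*(\<beta>+1)" by (simp add: algebra_simps power2_eq_square)
  have kk: "real k*(\<beta>+1) < (\<beta>-1)*(\<beta>+1)" using bb b1 by (intro mult_strict_right_mono) auto
  hence c1: "real k*\<beta> + real k < \<beta>^2 - 1" using q by (simp add: algebra_simps)
  have c3: "real (2*k)*(\<beta>+1) - (\<beta>^2-1) < real k*\<beta> + real k" using c1 by (simp add: algebra_simps)
  have E: "expansions \<beta> (2*k) ((real k*\<beta> + real k)/(\<beta>^2-1)) = {\<lambda>i. if even i then k else k}"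
    by (rule periodic_unique[OF b1 _ _ c1 c1 c3 c3]) auto
  have "(real k*\<beta> + real k)/(\<beta>^2-1) = (real k*(\<beta>+1))/((\<beta>-1)*(\<beta>+1))"
    using q by (simp add: algebra_simps)
  also have "\<dots> = real k/(\<beta>-1)" using b1 by simp
  finally have xv: "(real k*\<beta> + real k)/(\<beta>^2-1) = real k/(\<beta>-1)" .
  show "\<exists>x. 0 < x \<and> x < real (2*k)/(\<beta>-1) \<and> card (expansions \<beta> (2*k) x) = 1"
  proof (intro exI conjI)
    show "0 < (real k*\<beta> + real k)/(\<beta>^2-1)" using xv b1 k1 by simp
    show "(real k*\<beta> + real k)/(\<beta>^2-1) < real (2*k)/(\<beta>-1)" using xv b1 k1 by (simp add: divide_strict_right_mono)
    show "card (expansions \<beta> (2*k) ((real k*\<beta> + real k)/(\<beta>^2-1))) = 1" using E by simp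
  qed
qed

lemma odd_case:
  fixes k :: nat
  shows "gen_golden_ratio (2*k+1) ((real k + 1 + sqrt (real k ^ 2 + 6 * real k + 5)) / 2)"
proof -
  define sq where "sq = sqrt (real k ^ 2 + 6 * real k + 5)"
  have s0: "0 \<le> sq" unfolding sq_def by simp
  have ss: "sq * sq = real k ^ 2 + 6 * real k + 5" unfolding sq_def by (simp add: real_sqrt_mult_self)
  have s1: "1 < sq" unfolding sq_def by (rule real_less_rsqrt) (simp add: add_pos_nonneg add_nonneg_nonneg)
  show ?thesis unfolding gen_golden_ratio_def sq_def[symmetric]
  proof (intro conjI allI impI)
    fix \<beta> x :: real
    assume bb: "1 < \<beta> \<and> \<beta> < (real k + 1 + sq)/2 \<and> \<beta> \<le> real (2*k+1) + 1" and xx: "0 < x \<and> x < real (2*k+1)/(\<beta>-1)"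
    have b1: "1 < \<beta>" using bb by simp
    have Q: "\<beta>*\<beta> < (real k+1)*\<beta> + (real k + 1)"
    proof (cases "2*\<beta> \<le> real k + 1")
      case True
      have "\<beta>*\<beta> \<le> \<beta>*((real k+1)/2)" using True b1 by (intro mult_left_mono) auto
      moreover have "0 \<le> \<beta>*real k" using b1 by simp
      ultimately show ?thesis using b1 by (simp add: algebra_simps; linarith)
    next
      case False
      define u where "u = 2*\<beta> - (real k + 1)"
      have u0: "0 \<le> u" "u < sq" using False bb u_def by auto
      have "u * u < sq * sq" using u0 s0 by (intro mult_strict_mono) auto
      thus ?thesis unfolding ss u_def by (simp add: algebra_simps power2_eq_square)
    qed
    define L where "L = real (2*k+1)/(\<beta>-1)"
    have bL: "\<beta>*L = real (2*k+1) + L" using b1 unfolding L_def by (simp add: field_simps)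
    have b2: "\<beta> < 2*real k + 2"
    proof (rule ccontr)
      assume "\<not> \<beta> < 2*real k + 2"
      hence "(2*real k + 2)*\<beta> \<le> \<beta>*\<beta>" using b1 by (intro mult_right_mono) auto
      moreover have "real k \<le> \<beta>*real k" using b1 mult_right_mono[of 1 \<beta> "real k"] by simp
      ultimately show False using Q b1 by (simp add: algebra_simps; linarith)
    qed
    have L1: "1 < L" unfolding L_def using b1 b2 by (simp add: pos_less_divide_eq)
    have "(\<beta> - real k)*(\<beta>-1) < real (2*k+1)" using Q by (simp add: algebra_simps)
    hence kL: "\<beta> - real k < L" unfolding L_def using b1 by (simp add: pos_less_divide_eq)
    have kL2: "real k + 1 < \<beta>*(L - 1)" using bL kL by (simp add: algebra_simps)
    have H2: "1 < \<beta>*(L - 1)" using kL2 by simp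
    show "uncountable (expansions \<beta> (2*k+1) x)"
    proof (rule uncount[OF b1 _ L1[unfolded L_def] H2[unfolded L_def]])
      show "real (2*k+1)/(\<beta>-1) \<le> 2 \<Longrightarrow> \<exists>k'::nat. k'+1 \<le> 2*k+1 \<and> real k' + 1 < \<beta>*(real (2*k+1)/(\<beta>-1) - 1) \<and> \<beta> < real k' + real (2*k+1)/(\<beta>-1)"
        using kL kL2 unfolding L_def by (intro exI[of _ k]) auto
    qed (use xx in auto)
  next
    fix \<beta> :: real
    assume bb: "(real k + 1 + sq)/2 < \<beta> \<and> \<beta> \<le> real (2*k+1) + 1"
    have b1: "1 < \<beta>" using bb s1 by simp
    define u where "u = 2*\<beta> - (real k + 1)"
    have u0: "sq < u" using bb u_def by auto
    have "sq * sq < u * u" using u0 s0 by (intro mult_strict_mono) auto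
    hence Q: "(real k+1)*\<beta> + (real k + 1) < \<beta>*\<beta>" unfolding ss u_def by (simp add: algebra_simps power2_eq_square)
    have c1: "real (k+1)*\<beta> + real k < \<beta>^2 - 1" using Q by (simp add: algebra_simps power2_eq_square)
    have c2: "real k*\<beta> + real (k+1) < \<beta>^2 - 1" using Q b1 by (simp add: algebra_simps power2_eq_square)
    have c3: "real (2*k+1)*(\<beta>+1) - (\<beta>^2-1) < real (k+1)*\<beta> + real k" using c2 by (simp add: algebra_simps)
    have c4: "real (2*k+1)*(\<beta>+1) - (\<beta>^2-1) < real k*\<beta> + real (k+1)" using c1 by (simp add: algebra_simps)
    have E: "expansions \<beta> (2*k+1) ((real (k+1)*\<beta> + real k)/(\<beta>^2-1)) = {\<lambda>i. if even i then k+1 else k}"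
      by (rule periodic_unique[OF b1 _ _ c1 c2 c3 c4]) auto
    have q: "\<beta>^2 - 1 = (\<beta>-1)*(\<beta>+1)" by (simp add: algebra_simps power2_eq_square)
    have p: "0 < \<beta>^2 - 1" using q b1 by simp
    have "real (2*k+1)/(\<beta>-1) = (real (2*k+1)*(\<beta>+1))/(\<beta>^2-1)" using q b1 by simp
    moreover have "(real (k+1)*\<beta> + real k)/(\<beta>^2-1) < (real (2*k+1)*(\<beta>+1))/(\<beta>^2-1)"
    proof (rule divide_strict_right_mono)
      have "0 \<le> \<beta>*real k" using b1 by simp
      moreover have "real (2*k+1)*(\<beta>+1) - (real (k+1)*\<beta> + real k) = 1 + real k + \<beta>*real k"
        by (simp add: algebra_simps)
      ultimately show "real (k+1)*\<beta> + real k < real (2*k+1)*(\<beta>+1)" by linarith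
    qed (use p in simp)
    ultimately have xl: "(real (k+1)*\<beta> + real k)/(\<beta>^2-1) < real (2*k+1)/(\<beta>-1)" by simp
    show "\<exists>x. 0 < x \<and> x < real (2*k+1)/(\<beta>-1) \<and> card (expansions \<beta> (2*k+1) x) = 1"
    proof (intro exI conjI)
      have "0 \<le> \<beta>*real k" using b1 by simp
      moreover have "real (k+1)*\<beta> + real k = \<beta> + real k + \<beta>*real k" by (simp add: algebra_simps)
      ultimately have "0 < real (k+1)*\<beta> + real k" using b1 by linarith
      thus "0 < (real (k+1)*\<beta> + real k)/(\<beta>^2-1)" using p by simp
      show "(real (k+1)*\<beta> + real k)/(\<beta>^2-1) < real (2*k+1)/(\<beta>-1)" by (rule xl)
      show "card (expansions \<beta> (2*k+1) ((real (k+1)*\<beta> + real k)/(\<beta>^2-1))) = 1" using E by simp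
    qed
  qed
qed

theorem theorem1p1:
  fixes m :: nat
  assumes "m \<ge> 1"
  shows "(\<forall>k. m = 2 * k \<longrightarrow> gen_golden_ratio m (real k + 1)) \<and>
         (\<forall>k. m = 2 * k + 1 \<longrightarrow>
              gen_golden_ratio m ((real k + 1 + sqrt (real k ^ 2 + 6 * real k + 5)) / 2))"
  using even_case odd_case assms by auto

end
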